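(* Let $p$ be an odd prime and let $k$ be an integer with $2\le k\le p-1$. Let $T$ be an orthogonal trade in $B_p$ of index $(1,k)$. Then every symbol that occurs in $T$ occurs in $T$ at least $3$ times.
   Context: All arithmetic is modulo $p$, with elements of $\mathbb{Z}_p$ represented by residues $0,\dots,p-1$. A Latin square of order $p$ is viewed as a set of (row, column, symbol) triples in $\mathbb{Z}_p^3$. For $1\le k\le p-1$, $B_p(k)$ is the Latin square with symbol $ki+j$ in cell $(i,j)$, $i,j\in\mathbb{Z}_p$; $B_p=B_p(1)$. A Latin trade in a Latin square $L$ is a subset $T\subseteq L$ for which there is a partial Latin square $T'$ (a disjoint mate of $T$) such that $T$ and $T'$ occupy the same set of cells, $T\cap T'=\emptyset$, and each row (respectively column) of $T$ contains the same set of symbols as the corresponding row (column) of $T'$; then $(L\setminus T)\cup T'$ is a Latin square. Two Latin squares of order $p$ are orthogonal if superimposing them yields each of the $p^2$ ordered pairs of symbols exactly once. An orthogonal trade of index $(\ell,k)$ is a Latin trade $T\subseteq B_p(\ell)$ having a disjoint mate $T'$ such that $(B_p(\ell)\setminus T)\cup T'$ is orthogonal to $B_p(k)$. *)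

theory Defs
  imports Main "HOL-Computational_Algebra.Primes"
begin

text \<open>Latin squares of order p as sets of (row, column, symbol) triples over {0..<p},
  representing elements of Z_p by residues.\<close>

type_synonym triple = "nat \<times> nat \<times> nat"

definition partial_latin_square :: "nat \<Rightarrow> triple set \<Rightarrow> bool" where
  "partial_latin_square p P \<longleftrightarrow>
     (\<forall>(r,c,s)\<in>P. r < p \<and> c < p \<and> s < p) \<and>
     (\<forall>r c s s'. (r,c,s) \<in> P \<and> (r,c,s') \<in> P \<longrightarrow> s = s') \<and>
     (\<forall>r c c' s. (r,c,s) \<in> P \<and> (r,c',s) \<in> P \<longrightarrow> c = c') \<and>
     (\<forall>r r' c s. (r,c,s) \<in> P \<and> (r',c,s) \<in> P \<longrightarrow> r = r')"

definition latin_square :: "nat \<Rightarrow> triple set \<Rightarrow> bool" where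
  "latin_square p L \<longleftrightarrow> partial_latin_square p L \<and>
     (\<forall>r<p. \<forall>c<p. \<exists>s. (r,c,s) \<in> L)"

definition cells :: "triple set \<Rightarrow> (nat \<times> nat) set" where
  "cells T = {(r,c). \<exists>s. (r,c,s) \<in> T}"

definition row_syms :: "triple set \<Rightarrow> nat \<Rightarrow> nat set" where
  "row_syms T r = {s. \<exists>c. (r,c,s) \<in> T}"

definition col_syms :: "triple set \<Rightarrow> nat \<Rightarrow> nat set" where
  "col_syms T c = {s. \<exists>r. (r,c,s) \<in> T}"

definition disjoint_mate :: "nat \<Rightarrow> triple set \<Rightarrow> triple set \<Rightarrow> bool" where
  "disjoint_mate p T T' \<longleftrightarrow> partial_latin_square p T' \<and>
     cells T' = cells T \<and> T \<inter> T' = {} \<and>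
     (\<forall>r. row_syms T' r = row_syms T r) \<and> (\<forall>c. col_syms T' c = col_syms T c)"

definition latin_trade :: "nat \<Rightarrow> triple set \<Rightarrow> triple set \<Rightarrow> bool" where
  "latin_trade p L T \<longleftrightarrow> T \<subseteq> L \<and> (\<exists>T'. disjoint_mate p T T')"

definition B :: "nat \<Rightarrow> nat \<Rightarrow> triple set" where
  "B p k = {(i, j, (k*i + j) mod p) | i j. i < p \<and> j < p}"

definition orthogonal :: "nat \<Rightarrow> triple set \<Rightarrow> triple set \<Rightarrow> bool" where
  "orthogonal p L1 L2 \<longleftrightarrow> latin_square p L1 \<and> latin_square p L2 \<and>
     (\<forall>a<p. \<forall>b<p. \<exists>!(r,c). r < p \<and> c < p \<and> (r,c,a) \<in> L1 \<and> (r,c,b) \<in> L2)"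

definition orthogonal_trade :: "nat \<Rightarrow> nat \<Rightarrow> nat \<Rightarrow> triple set \<Rightarrow> bool" where
  "orthogonal_trade p l k T \<longleftrightarrow> latin_trade p (B p l) T \<and>
     (\<exists>T'. disjoint_mate p T T' \<and> orthogonal p ((B p l - T) \<union> T') (B p k))"

definition sym_count :: "triple set \<Rightarrow> nat \<Rightarrow> nat" where
  "sym_count T s = card {(r,c). (r,c,s) \<in> T}"

end

theory Submission
  imports Defs "HOL-Number_Theory.Cong"
begin

lemma L1: fixes i j j' p :: nat assumes "j<p" "j'<p" "(i+j) mod p = (i+j') mod p" shows "j=j'"
proof -
  have "[i+j = i+j'] (mod p)" using assms(3) by (simp add: cong_def)
  then have "[j = j'] (mod p)" by (simp only: cong_add_lcancel_nat)
  then show ?thesis using assms(1,2) by (rule cong_less_modulus_unique_nat)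
qed
lemma L2: fixes m i i' p :: nat assumes "prime p" "0<m" "m<p" "i<p" "i'<p" "(m*i) mod p = (m*i') mod p" shows "i=i'"
proof -
  have "\<not> p dvd m" using assms(2,3) by (auto dest: dvd_imp_le)
  then have "coprime p m" by (rule prime_imp_coprime[OF assms(1)])
  then have cp: "coprime m p" by (simp add: coprime_commute)
  have "[m*i = m*i'] (mod p)" using assms(6) by (simp add: cong_def)
  then have "[i = i'] (mod p)" using cong_mult_lcancel_nat[OF cp] by simp
  then show ?thesis using assms(4,5) by (rule cong_less_modulus_unique_nat)
qed
lemma L3: fixes k i j r c p :: nat assumes "1\<le>k" "(k*i+j) mod p = (k*r+c) mod p" "(i+j) mod p = (r+c) mod p"
  shows "((k-1)*i) mod p = ((k-1)*r) mod p"
proof -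
  have c1: "[k*i+j + (r+c) = k*r+c + (i+j)] (mod p)"
    using assms(2,3) unfolding cong_def by (metis mod_add_cong)
  obtain m where m: "k = Suc m" using assms(1) by (cases k) auto
  have e: "k*i+j + (r+c) = ((k-1)*i) + (r+i+j+c)" "k*r+c + (i+j) = ((k-1)*r) + (r+i+j+c)"
    by (simp_all add: m algebra_simps)
  have "[((k-1)*i) + (r+i+j+c) = ((k-1)*r) + (r+i+j+c)] (mod p)" using c1 unfolding e .
  then have "[(k-1)*i = (k-1)*r] (mod p)" by (simp only: cong_add_rcancel_nat)
  thus ?thesis by (simp add: cong_def)
qed

lemma B1_mem: "(i,j,x) \<in> B p 1 \<longleftrightarrow> i<p \<and> j<p \<and> x = (i+j) mod p"
  unfolding B_def by auto

lemma Bk_mem: "(i,j,x) \<in> B p k \<longleftrightarrow> i<p \<and> j<p \<and> x = (k*i+j) mod p"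
  unfolding B_def by auto

theorem lemma3p1:
  fixes p k :: nat and T :: "triple set"
  assumes "prime p" and "odd p" and "2 \<le> k" and "k \<le> p - 1"
    and "orthogonal_trade p 1 k T"
  shows "\<forall>s. (\<exists>r c. (r,c,s) \<in> T) \<longrightarrow> sym_count T s \<ge> 3"
proof (intro allI impI)
  fix s assume "\<exists>r c. (r,c,s) \<in> T"
  then obtain r c where rc: "(r,c,s) \<in> T" by blast
  have TB: "T \<subseteq> B p 1" using assms(5) unfolding orthogonal_trade_def latin_trade_def by blast
  obtain T' where mate: "disjoint_mate p T T'" and orth: "orthogonal p ((B p 1 - T) \<union> T') (B p k)"
    using assms(5) unfolding orthogonal_trade_def by blast
  have pl': "partial_latin_square p T'" and ce: "cells T' = cells T" and dis: "T \<inter> T' = {}"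
    and rs: "\<And>i. row_syms T' i = row_syms T i" and cs: "\<And>j. col_syms T' j = col_syms T j"
    using mate unfolding disjoint_mate_def by blast+
  have TBm: "\<And>i j x. (i,j,x) \<in> T \<Longrightarrow> i<p \<and> j<p \<and> x = (i+j) mod p"
    using TB B1_mem by blast
  have T'row: "\<And>i j j' x. (i,j,x) \<in> T' \<Longrightarrow> (i,j',x) \<in> T' \<Longrightarrow> j = j'"
    using pl' unfolding partial_latin_square_def by blast
  have step1: "\<And>a b. (a,b,s) \<in> T \<Longrightarrow> \<exists>a2 b2. (a2,b2,s) \<in> T \<and> a2 \<noteq> a \<and> (a,b2,s) \<in> T'"
  proof -
    fix a b assume ab: "(a,b,s) \<in> T"
    have "s \<in> row_syms T' a" using ab rs unfolding row_syms_def by blast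
    then obtain b' where b': "(a,b',s) \<in> T'" unfolding row_syms_def by blast
    have "s \<in> col_syms T b'" using b' cs[of b'] unfolding col_syms_def by blast
    then obtain a2 where a2: "(a2,b',s) \<in> T" unfolding col_syms_def by blast
    have "a2 \<noteq> a"
    proof
      assume "a2 = a"
      then have "(a,b',s) \<in> T" using a2 by simp
      then have "b' < p" "s = (a+b') mod p" using TBm by blast+
      moreover have "b < p" "s = (a+b) mod p" using TBm ab by blast+
      ultimately have "b' = b" using L1[of b' p b a] by simp
      then show False using ab b' dis by blast
    qed
    then show "\<exists>a2 b2. (a2,b2,s) \<in> T \<and> a2 \<noteq> a \<and> (a,b2,s) \<in> T'" using a2 b' by blast
  qed
  define S where "S = {(i,j). (i,j,s) \<in> T}"
  have finS: "finite S"
  proof -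
    have "S \<subseteq> {..<p} \<times> {..<p}" unfolding S_def using TBm by auto
    then show ?thesis by (rule finite_subset) auto
  qed
  show "sym_count T s \<ge> 3"
  proof (rule ccontr)
    assume "\<not> 3 \<le> sym_count T s"
    then have cS: "card S \<le> 2" unfolding sym_count_def S_def by simp
    obtain r2 c2 where r2: "(r2,c2,s) \<in> T" "r2 \<noteq> r" "(r,c2,s) \<in> T'" using step1[OF rc] by blast
    have Seq: "S = {(r,c),(r2,c2)}"
    proof -
      have sub: "{(r,c),(r2,c2)} \<subseteq> S" using rc r2 unfolding S_def by auto
      have "card {(r,c),(r2,c2)} = 2" using r2(2) by simp
      then show ?thesis using sub cS finS by (metis card_seteq)
    qed
    obtain r3 c3 where r3: "(r3,c3,s) \<in> T" "r3 \<noteq> r2" "(r2,c3,s) \<in> T'" using step1[OF r2(1)] by blast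
    have "(r3,c3) \<in> S" using r3 unfolding S_def by auto
    then have "c3 = c" using Seq r3(2) by auto
    then have r2c: "(r2,c,s) \<in> T'" using r3 by simp
    have "p > 0" using assms(1) prime_gt_0_nat by blast
    have "s < p" using TBm[OF rc] \<open>p > 0\<close> by simp
    define b where "b = (k*r + c) mod p"
    have "b < p" unfolding b_def using \<open>p > 0\<close> by simp
    have "\<exists>!(r,c). r < p \<and> c < p \<and> (r,c,s) \<in> (B p 1 - T) \<union> T' \<and> (r,c,b) \<in> B p k"
    proof -
      have H: "\<forall>a<p. \<forall>b<p. \<exists>!(r,c). r < p \<and> c < p \<and> (r,c,a) \<in> (B p 1 - T) \<union> T' \<and> (r,c,b) \<in> B p k"
        using orth unfolding orthogonal_def by (rule conjunct2[OF conjunct2])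
      show ?thesis using H[rule_format, OF \<open>s < p\<close> \<open>b < p\<close>] .
    qed
    then have "\<exists>x. (case x of (r,c) \<Rightarrow> r < p \<and> c < p \<and> (r,c,s) \<in> (B p 1 - T) \<union> T' \<and> (r,c,b) \<in> B p k)"
      by (rule ex1_implies_ex)
    then obtain i j where ij: "i < p" "j < p" "(i,j,s) \<in> (B p 1 - T) \<union> T'" "(i,j,b) \<in> B p k"
      by auto
    have bij: "b = (k*i+j) mod p" using ij(4) Bk_mem by blast
    have kp: "0 < k" "k < p" using assms(3,4) \<open>p>0\<close> by auto
    show False
    proof (cases "(i,j,s) \<in> T'")
      case True
      have "s \<in> row_syms T i" using True rs[of i] unfolding row_syms_def by blast
      then obtain j' where "(i,j',s) \<in> T" unfolding row_syms_def by blast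
      then have "(i,j') \<in> S" unfolding S_def by auto
      then have "i = r \<or> i = r2" using Seq by auto
      then show False
      proof
        assume ir: "i = r"
        then have "j = c2" using T'row True r2(3) by blast
        have "c2 < p" "s = (r2+c2) mod p" using TBm r2(1) by blast+
        have "c < p" "s = (r+c) mod p" using TBm rc by blast+
        have "(k*r+c2) mod p = (k*r+c) mod p" using bij b_def ir \<open>j = c2\<close> by simp
        then have "c2 = c" using L1[of c2 p c "k*r"] \<open>c2 < p\<close> \<open>c < p\<close> by simp
        have "r2 < p" using TBm r2(1) by blast
        have "r < p" using TBm rc by blast
        have "(c+r2) mod p = (c+r) mod p" using \<open>s = (r2+c2) mod p\<close> \<open>s = (r+c) mod p\<close> \<open>c2 = c\<close>
          by (simp add: add.commute)
        then have "r2 = r" using L1[of r2 p r c] \<open>r2 < p\<close> \<open>r < p\<close> by simp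
        then show False using r2(2) by simp
      next
        assume ir: "i = r2"
        then have "j = c" using T'row True r2c by blast
        then have "(k*r2) mod p = (k*r) mod p" using bij b_def ir
          using cong_add_rcancel_nat[of "k*r2" c "k*r" p] unfolding cong_def by simp
        moreover have "r2 < p" using TBm r2(1) by blast
        moreover have "r < p" using TBm rc by blast
        ultimately have "r2 = r" using L2[OF assms(1) kp, of r2 r] by blast
        then show False using r2(2) by simp
      qed
    next
      case False
      then have ijB: "(i,j,s) \<in> B p 1" "(i,j,s) \<notin> T" using ij(3) by auto
      have "s = (i+j) mod p" using ijB(1) B1_mem by blast
      moreover have "s = (r+c) mod p" using TBm rc by blast
      ultimately have e1: "(i+j) mod p = (r+c) mod p" by simp
      have "((k-1)*i) mod p = ((k-1)*r) mod p" using L3[of k i j p r c] kp bij b_def e1 by simp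
      moreover have "r < p" using TBm rc by blast
      moreover have "0 < k-1" "k-1 < p" using assms(3) kp by auto
      ultimately have "i = r" using L2[OF assms(1), of "k-1" i r] ij(1) by blast
      moreover have "c < p" using TBm rc by blast
      ultimately have "j = c" using e1 L1[of j p c r] ij(2) by simp
      then show False using ijB(2) rc \<open>i = r\<close> by simp
    qed
  qed
qed

end
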